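(* Let $\boldsymbol\pi\in\mathcal P^+$ and let $V\in\hat{\mathcal F}$ be a self-extension of $V(\boldsymbol\pi)$. Then $V$ is non-trivial if and only if $V_{\mathrm{wt}\boldsymbol\pi}$ contains a unique (up to scalars) highest-$\ell$-weight vector. Moreover, if $V$ is non-trivial and $v\in V_{\mathrm{wt}\boldsymbol\pi}$ is not an $\ell$-weight vector, then $V=\hat{\mathbf U}_qv$.
   Context: Setting: $R$ irreducible reduced root system with simple roots indexed by $I$, fundamental weights $\omega_i$, weight lattice $P$, $d_i$ symmetrizing integers, $q\in\mathbb C^\times$ not a root of unity, $q_i=q^{d_i}$, $[m]_i=(q_i^m-q_i^{-m})/(q_i-q_i^{-1})$. $\hat{\mathbf U}_q$ is the quantum loop algebra of $R$ with Drinfeld generators $x^\pm_{i,r}$ ($r\in\mathbb Z$), $h_{i,s}$ ($s\in\mathbb Z\setminus\{0\}$), $k_i^{\pm1}$. A module $V$ is of type 1 if $V=\bigoplus_{\mu\in P}V_\mu$, $V_\mu=\{v:k_iv=q_i^{\mu_i}v\}$ where $\mu=\sum\mu_i\omega_i$; $\hat{\mathcal F}$ is the category of finite-dimensional type 1 modules. An $\ell$-weight vector is a simultaneous eigenvector of all $h_{i,s}$; a highest-$\ell$-weight vector is an $\ell$-weight vector lying in some $V_\mu$ and annihilated by all $x^+_{i,r}$. $\mathcal P^+$ is the monoid of $I$-tuples $\boldsymbol\pi=(\pi_i)$ of polynomials with constant term 1, $\mathrm{wt}\boldsymbol\pi=\sum_i(\deg\pi_i)\omega_i$, and $V(\boldsymbol\pi)$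 is the simple object of $\hat{\mathcal F}$ generated by a highest-$\ell$-weight vector $v(\boldsymbol\pi)\in V(\boldsymbol\pi)_{\mathrm{wt}\boldsymbol\pi}$ with $h_{i,s}$-eigenvalues $h_{i,s}(\boldsymbol\pi)$ given by $\exp(-\sum_{s\ge1}h_{i,\pm s}(\boldsymbol\pi)u^s/[s]_i)=\pi_i^\pm(u)$ ($\pi_i^+=\pi_i$, $\pi_i^-(u)=u^{\deg\pi_i}\pi_i(u^{-1})$ normalized to constant term 1). A self-extension of $V(\boldsymbol\pi)$ is an object $V$ of $\hat{\mathcal F}$ fitting in a short exact sequence $0\to V(\boldsymbol\pi)\to V\to V(\boldsymbol\pi)\to0$; it is trivial if $V\cong V(\boldsymbol\pi)\oplus V(\boldsymbol\pi)$ and non-trivial otherwise. *)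

theory Defs
  imports "HOL-Analysis.Analysis" "HOL-Computational_Algebra.Polynomial_FPS"
begin

text \<open>The irreducible reduced root system R enters only through its Cartan matrix
  a (indexed by the simple roots, type 'i) and the symmetrizing integers d.
  We characterise these as the indecomposable, symmetrizable, positive definite
  generalised Cartan matrices, i.e. the Cartan matrices of finite type.\<close>

definition finite_type_cartan :: "('i::finite \<Rightarrow> 'i \<Rightarrow> int) \<Rightarrow> ('i \<Rightarrow> nat) \<Rightarrow> bool" where
  "finite_type_cartan a d \<longleftrightarrow>
     (\<forall>i. a i i = 2) \<and> (\<forall>i j. i \<noteq> j \<longrightarrow> a i j \<le> 0) \<and>
     (\<forall>i. 0 < d i) \<and> (\<forall>i j. int (d i) * a i j = int (d j) * a j i) \<and>
     (\<forall>x::'i \<Rightarrow> real. x \<noteq> (\<lambda>_. 0) \<longrightarrow>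
        (\<Sum>i\<in>UNIV. \<Sum>j\<in>UNIV. x i * real (d i) * of_int (a i j) * x j) > 0) \<and>
     (\<forall>J::'i set. J \<noteq> {} \<and> J \<noteq> UNIV \<longrightarrow> (\<exists>i\<in>J. \<exists>j. j \<notin> J \<and> a i j \<noteq> 0))"

definition qi :: "complex \<Rightarrow> ('i \<Rightarrow> nat) \<Rightarrow> 'i \<Rightarrow> complex" where
  "qi q d i = q ^ d i"

definition qnum :: "complex \<Rightarrow> int \<Rightarrow> complex" where
  "qnum x m = (x powi m - x powi (- m)) / (x - inverse x)"

definition qfact :: "complex \<Rightarrow> nat \<Rightarrow> complex" where
  "qfact x n = (\<Prod>t\<in>{1..n}. qnum x (int t))"

definition qbinom :: "complex \<Rightarrow> nat \<Rightarrow> nat \<Rightarrow> complex" where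
  "qbinom x m k = qfact x m / (qfact x k * qfact x (m - k))"

datatype 'i gen = Xp 'i int | Xm 'i int | Hg 'i int | Kg 'i | Kinv 'i

text \<open>h_{i,0} is not a generator.\<close>
definition valid_gen :: "'i gen \<Rightarrow> bool" where
  "valid_gen g \<longleftrightarrow> (\<forall>i. g \<noteq> Hg i 0)"

type_synonym ('i, 'n) rep = "'i gen \<Rightarrow> complex^'n^'n"

definition cscale :: "complex \<Rightarrow> complex^'n^'n \<Rightarrow> complex^'n^'n" where
  "cscale c M = (\<chi> a b. c * M $ a $ b)"

definition mprod :: "(complex^'n^'n) list \<Rightarrow> complex^'n^'n" where
  "mprod ms = foldr (\<lambda>A B. A ** B) ms (mat 1)"

definition compositions :: "nat \<Rightarrow> nat \<Rightarrow> nat list set" where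
  "compositions r k = {ss. length ss = k \<and> (\<forall>x\<in>set ss. 0 < x) \<and> sum_list ss = r}"

text \<open>Coefficient of u^r in exp(\<Sum>_{s\<ge>1} Hs s u^s) (formal power series with matrix coefficients).\<close>
definition exp_coeff :: "(nat \<Rightarrow> complex^'n^'n) \<Rightarrow> nat \<Rightarrow> complex^'n^'n" where
  "exp_coeff Hs r = (\<Sum>k\<in>{..r}. \<Sum>ss\<in>compositions r k. cscale (1 / of_nat (fact k)) (mprod (map Hs ss)))"

text \<open>\<Sum>_{r\<ge>0} psi^+_{i,r} u^r = k_i exp((q_i-q_i^{-1}) \<Sum>_{s\<ge>1} h_{i,s} u^s), psi^+_{i,r}=0 for r<0;
  \<Sum>_{r\<ge>0} psi^-_{i,-r} u^r = k_i^{-1} exp(-(q_i-q_i^{-1}) \<Sum>_{s\<ge>1} h_{i,-s} u^s), psi^-_{i,r}=0 for r>0.\<close>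
definition psi_plus :: "complex \<Rightarrow> ('i \<Rightarrow> nat) \<Rightarrow> ('i, 'n) rep \<Rightarrow> 'i \<Rightarrow> int \<Rightarrow> complex^'n^'n" where
  "psi_plus q d \<rho> i m = (if m < 0 then 0 else
     \<rho> (Kg i) ** exp_coeff (\<lambda>s. cscale (qi q d i - inverse (qi q d i)) (\<rho> (Hg i (int s)))) (nat m))"

definition psi_minus :: "complex \<Rightarrow> ('i \<Rightarrow> nat) \<Rightarrow> ('i, 'n) rep \<Rightarrow> 'i \<Rightarrow> int \<Rightarrow> complex^'n^'n" where
  "psi_minus q d \<rho> i m = (if 0 < m then 0 else
     \<rho> (Kinv i) ** exp_coeff (\<lambda>s. cscale (- (qi q d i - inverse (qi q d i))) (\<rho> (Hg i (- int s)))) (nat (- m)))"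

definition serre_sum :: "complex \<Rightarrow> ('i \<Rightarrow> nat) \<Rightarrow> (int \<Rightarrow> complex^'n^'n) \<Rightarrow> complex^'n^'n \<Rightarrow> complex \<Rightarrow> nat
     \<Rightarrow> (nat \<Rightarrow> int) \<Rightarrow> complex^'n^'n" where
  "serre_sum q d Xi Y x m r =
     (\<Sum>\<sigma>\<in>{\<sigma>. \<sigma> permutes {..<m}}. \<Sum>k\<in>{..m}.
        cscale ((-1) ^ k * qbinom x m k)
          (mprod (map (\<lambda>t. Xi (r (\<sigma> t))) [0..<k]) ** Y ** mprod (map (\<lambda>t. Xi (r (\<sigma> t))) [k..<m])))"

definition qloop_rep :: "('i::finite \<Rightarrow> 'i \<Rightarrow> int) \<Rightarrow> ('i \<Rightarrow> nat) \<Rightarrow> complex \<Rightarrow> ('i, 'n::finite) rep \<Rightarrow> bool" where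
  "qloop_rep a d q \<rho> \<longleftrightarrow>
    (\<forall>i. \<rho> (Kg i) ** \<rho> (Kinv i) = mat 1 \<and> \<rho> (Kinv i) ** \<rho> (Kg i) = mat 1) \<and>
    (\<forall>i j. \<rho> (Kg i) ** \<rho> (Kg j) = \<rho> (Kg j) ** \<rho> (Kg i)) \<and>
    (\<forall>i j s. s \<noteq> 0 \<longrightarrow> \<rho> (Kg i) ** \<rho> (Hg j s) = \<rho> (Hg j s) ** \<rho> (Kg i)) \<and>
    (\<forall>i j r. \<rho> (Kg i) ** \<rho> (Xp j r) ** \<rho> (Kinv i) = cscale (qi q d i powi a i j) (\<rho> (Xp j r))) \<and>
    (\<forall>i j r. \<rho> (Kg i) ** \<rho> (Xm j r) ** \<rho> (Kinv i) = cscale (qi q d i powi (- a i j)) (\<rho> (Xm j r))) \<and>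
    (\<forall>i j s t. s \<noteq> 0 \<and> t \<noteq> 0 \<longrightarrow> \<rho> (Hg i s) ** \<rho> (Hg j t) = \<rho> (Hg j t) ** \<rho> (Hg i s)) \<and>
    (\<forall>i j s r. s \<noteq> 0 \<longrightarrow> \<rho> (Hg i s) ** \<rho> (Xp j r) - \<rho> (Xp j r) ** \<rho> (Hg i s)
        = cscale (qnum (qi q d i) (s * a i j) / of_int s) (\<rho> (Xp j (r + s)))) \<and>
    (\<forall>i j s r. s \<noteq> 0 \<longrightarrow> \<rho> (Hg i s) ** \<rho> (Xm j r) - \<rho> (Xm j r) ** \<rho> (Hg i s)
        = cscale (- (qnum (qi q d i) (s * a i j) / of_int s)) (\<rho> (Xm j (r + s)))) \<and>
    (\<forall>i j r s. \<rho> (Xp i (r + 1)) ** \<rho> (Xp j s) - cscale (qi q d i powi a i j) (\<rho> (Xp j s) ** \<rho> (Xp i (r + 1)))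
        = cscale (qi q d i powi a i j) (\<rho> (Xp i r) ** \<rho> (Xp j (s + 1))) - \<rho> (Xp j (s + 1)) ** \<rho> (Xp i r)) \<and>
    (\<forall>i j r s. \<rho> (Xm i (r + 1)) ** \<rho> (Xm j s) - cscale (qi q d i powi (- a i j)) (\<rho> (Xm j s) ** \<rho> (Xm i (r + 1)))
        = cscale (qi q d i powi (- a i j)) (\<rho> (Xm i r) ** \<rho> (Xm j (s + 1))) - \<rho> (Xm j (s + 1)) ** \<rho> (Xm i r)) \<and>
    (\<forall>i j r s. \<rho> (Xp i r) ** \<rho> (Xm j s) - \<rho> (Xm j s) ** \<rho> (Xp i r)
        = (if i = j then cscale (inverse (qi q d i - inverse (qi q d i)))
                           (psi_plus q d \<rho> i (r + s) - psi_minus q d \<rho> i (r + s)) else 0)) \<and>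
    (\<forall>i j. i \<noteq> j \<longrightarrow> (\<forall>r s.
        serre_sum q d (\<lambda>t. \<rho> (Xp i t)) (\<rho> (Xp j s)) (qi q d i) (nat (1 - a i j)) r = 0 \<and>
        serre_sum q d (\<lambda>t. \<rho> (Xm i t)) (\<rho> (Xm j s)) (qi q d i) (nat (1 - a i j)) r = 0))"

text \<open>Weights \<mu> = \<Sum> \<mu>_i \<omega>_i \<in> P are given by their coordinates \<mu> :: 'i \<Rightarrow> int.\<close>
definition weight_space :: "complex \<Rightarrow> ('i \<Rightarrow> nat) \<Rightarrow> ('i, 'n::finite) rep \<Rightarrow> ('i \<Rightarrow> int) \<Rightarrow> (complex^'n) set" where
  "weight_space q d \<rho> \<mu> = {v. \<forall>i. \<rho> (Kg i) *v v = (qi q d i powi \<mu> i) *s v}"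

definition type1 :: "complex \<Rightarrow> ('i \<Rightarrow> nat) \<Rightarrow> ('i, 'n::finite) rep \<Rightarrow> bool" where
  "type1 q d \<rho> \<longleftrightarrow> (\<forall>v. \<exists>M f. finite M \<and> (\<forall>\<mu>\<in>M. f \<mu> \<in> weight_space q d \<rho> \<mu>) \<and> v = (\<Sum>\<mu>\<in>M. f \<mu>))"

text \<open>An object of the category F-hat: a finite-dimensional type 1 module, realised on complex^'n.\<close>
definition in_Fhat :: "('i::finite \<Rightarrow> 'i \<Rightarrow> int) \<Rightarrow> ('i \<Rightarrow> nat) \<Rightarrow> complex \<Rightarrow> ('i, 'n::finite) rep \<Rightarrow> bool" where
  "in_Fhat a d q \<rho> \<longleftrightarrow> qloop_rep a d q \<rho> \<and> type1 q d \<rho>"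

definition csubspace :: "(complex^'n) set \<Rightarrow> bool" where
  "csubspace U \<longleftrightarrow> 0 \<in> U \<and> (\<forall>x\<in>U. \<forall>y\<in>U. x + y \<in> U) \<and> (\<forall>c. \<forall>x\<in>U. c *s x \<in> U)"

definition submodule :: "('i, 'n::finite) rep \<Rightarrow> (complex^'n) set \<Rightarrow> bool" where
  "submodule \<rho> U \<longleftrightarrow> csubspace U \<and> (\<forall>g. valid_gen g \<longrightarrow> (\<forall>v\<in>U. \<rho> g *v v \<in> U))"

definition generated_submodule :: "('i, 'n::finite) rep \<Rightarrow> complex^'n \<Rightarrow> (complex^'n) set" where
  "generated_submodule \<rho> v = \<Inter>{U. submodule \<rho> U \<and> v \<in> U}"

definition ell_weight_vector :: "('i, 'n::finite) rep \<Rightarrow> complex^'n \<Rightarrow> bool" where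
  "ell_weight_vector \<rho> v \<longleftrightarrow> v \<noteq> 0 \<and> (\<exists>c. \<forall>i s. s \<noteq> 0 \<longrightarrow> \<rho> (Hg i s) *v v = c i s *s v)"

definition hlw_vector :: "complex \<Rightarrow> ('i \<Rightarrow> nat) \<Rightarrow> ('i, 'n::finite) rep \<Rightarrow> ('i \<Rightarrow> int) \<Rightarrow> complex^'n \<Rightarrow> bool" where
  "hlw_vector q d \<rho> \<mu> v \<longleftrightarrow> ell_weight_vector \<rho> v \<and> v \<in> weight_space q d \<rho> \<mu> \<and>
     (\<forall>i r. \<rho> (Xp i r) *v v = 0)"

definition drinfeld_poly :: "('i \<Rightarrow> complex poly) \<Rightarrow> bool" where
  "drinfeld_poly \<pi> \<longleftrightarrow> (\<forall>i. coeff (\<pi> i) 0 = 1)"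

definition wt :: "('i \<Rightarrow> complex poly) \<Rightarrow> 'i \<Rightarrow> int" where
  "wt \<pi> = (\<lambda>i. int (degree (\<pi> i)))"

text \<open>pi^-(u) = u^{deg pi} pi(u^{-1}), normalised to have constant term 1.\<close>
definition pi_minus :: "complex poly \<Rightarrow> complex poly" where
  "pi_minus p = smult (inverse (lead_coeff p)) (reflect_poly p)"

text \<open>hv i s = h_{i,s}(\<pi>): exp(-\<Sum>_{s\<ge>1} h_{i,\<plusminus>s}(\<pi>) u^s/[s]_i) = \<pi>_i^\<plusminus>(u).\<close>
definition ell_weight_of :: "complex \<Rightarrow> ('i \<Rightarrow> nat) \<Rightarrow> ('i \<Rightarrow> complex poly) \<Rightarrow> ('i \<Rightarrow> int \<Rightarrow> complex) \<Rightarrow> bool" where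
  "ell_weight_of q d \<pi> hv \<longleftrightarrow> (\<forall>i.
     fps_exp 1 oo Abs_fps (\<lambda>n. if n = 0 then 0 else - hv i (int n) / qnum (qi q d i) (int n))
       = fps_of_poly (\<pi> i) \<and>
     fps_exp 1 oo Abs_fps (\<lambda>n. if n = 0 then 0 else - hv i (- int n) / qnum (qi q d i) (int n))
       = fps_of_poly (pi_minus (\<pi> i)))"

text \<open>The subquotient U/W (W \<subseteq> U submodules) is isomorphic to V(\<pi>): it is a simple module
  containing a highest-ell-weight vector (the image of v) of weight wt \<pi> and ell-weight given by \<pi>.\<close>
definition subquot_is_V :: "complex \<Rightarrow> ('i \<Rightarrow> nat) \<Rightarrow> ('i, 'n::finite) rep \<Rightarrow> ('i \<Rightarrow> complex poly)
     \<Rightarrow> (complex^'n) set \<Rightarrow> (complex^'n) set \<Rightarrow> bool" where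
  "subquot_is_V q d \<rho> \<pi> W U \<longleftrightarrow>
     submodule \<rho> W \<and> submodule \<rho> U \<and> W \<subset> U \<and>
     (\<forall>U'. submodule \<rho> U' \<and> W \<subseteq> U' \<and> U' \<subseteq> U \<longrightarrow> U' = W \<or> U' = U) \<and>
     (\<exists>v\<in>U - W. \<exists>hv. ell_weight_of q d \<pi> hv \<and>
        (\<forall>i. \<rho> (Kg i) *v v - (qi q d i powi wt \<pi> i) *s v \<in> W) \<and>
        (\<forall>i r. \<rho> (Xp i r) *v v \<in> W) \<and>
        (\<forall>i s. s \<noteq> 0 \<longrightarrow> \<rho> (Hg i s) *v v - hv i s *s v \<in> W))"

definition self_extension :: "complex \<Rightarrow> ('i \<Rightarrow> nat) \<Rightarrow> ('i, 'n::finite) rep \<Rightarrow> ('i \<Rightarrow> complex poly) \<Rightarrow> bool" where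
  "self_extension q d \<rho> \<pi> \<longleftrightarrow>
     (\<exists>U. subquot_is_V q d \<rho> \<pi> {0} U \<and> subquot_is_V q d \<rho> \<pi> U UNIV)"

definition trivial_self_extension :: "complex \<Rightarrow> ('i \<Rightarrow> nat) \<Rightarrow> ('i, 'n::finite) rep \<Rightarrow> ('i \<Rightarrow> complex poly) \<Rightarrow> bool" where
  "trivial_self_extension q d \<rho> \<pi> \<longleftrightarrow>
     (\<exists>U1 U2. subquot_is_V q d \<rho> \<pi> {0} U1 \<and> subquot_is_V q d \<rho> \<pi> {0} U2 \<and>
        U1 \<inter> U2 = {0} \<and> (\<forall>v. \<exists>x\<in>U1. \<exists>y\<in>U2. v = x + y))"

end

theory Submission
  imports Defs "HOL-Library.Function_Algebras"
begin


definition stab :: "complex^'n^'n \<Rightarrow> (complex^'n) set \<Rightarrow> bool" where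
  "stab M S \<longleftrightarrow> (\<forall>x\<in>S. M *v x \<in> S)"

lemma cscale_mv: "cscale c M *v x = c *s (M *v x)"
  by (simp add: cscale_def matrix_vector_mult_def vec_eq_iff sum_distrib_left mult.assoc)

lemma cs_0: "csubspace S \<Longrightarrow> 0 \<in> S" by (simp add: csubspace_def)
lemma cs_add: "csubspace S \<Longrightarrow> x \<in> S \<Longrightarrow> y \<in> S \<Longrightarrow> x + y \<in> S" by (simp add: csubspace_def)
lemma cs_smul: "csubspace S \<Longrightarrow> x \<in> S \<Longrightarrow> c *s x \<in> S" by (simp add: csubspace_def)
lemma cs_neg: "csubspace S \<Longrightarrow> x \<in> S \<Longrightarrow> - x \<in> S"
  using cs_smul[of S x "-1"] by (simp add: vector_sneg_minus1[symmetric])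
lemma cs_diff: "csubspace S \<Longrightarrow> x \<in> S \<Longrightarrow> y \<in> S \<Longrightarrow> x - y \<in> S"
  using cs_add[of S x "-y"] cs_neg[of S y] by simp
lemma cs_diff_iff: "csubspace S \<Longrightarrow> y \<in> S \<Longrightarrow> x - y \<in> S \<longleftrightarrow> x \<in> S"
  by (metis cs_add cs_diff diff_add_cancel)
lemma cs_sum_list: "csubspace S \<Longrightarrow> (\<forall>x\<in>set xs. x \<in> S) \<Longrightarrow> sum_list xs \<in> S"
  by (induction xs) (auto simp: cs_0 cs_add)

lemma stab_mult: "stab A S \<Longrightarrow> stab B S \<Longrightarrow> stab (A ** B) S"
  by (simp add: stab_def matrix_vector_mul_assoc[symmetric])
lemma stab_add: "csubspace S \<Longrightarrow> stab A S \<Longrightarrow> stab B S \<Longrightarrow> stab (A + B) S"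
  by (simp add: stab_def matrix_vector_mult_add_rdistrib cs_add)
lemma stab_diff: "csubspace S \<Longrightarrow> stab A S \<Longrightarrow> stab B S \<Longrightarrow> stab (A - B) S"
  by (simp add: stab_def matrix_vector_mult_diff_rdistrib cs_diff)
lemma stab_cscale: "csubspace S \<Longrightarrow> stab A S \<Longrightarrow> stab (cscale c A) S"
  by (simp add: stab_def cscale_mv cs_smul)
lemma stab_mat1: "stab (mat 1) S" by (simp add: stab_def)
lemma stab_zero: "csubspace S \<Longrightarrow> stab 0 S" by (simp add: stab_def cs_0)
lemma stab_sum: "csubspace S \<Longrightarrow> (\<forall>x\<in>A. stab (f x) S) \<Longrightarrow> stab (sum f A) S"
proof (induction A rule: infinite_finite_induct)
  case (infinite A) then show ?case by (simp add: stab_zero)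
next
  case empty then show ?case by (simp add: stab_zero)
next
  case (insert x F) then show ?case by (simp add: stab_add)
qed
lemma mprod_Cons: "mprod (A # ms) = A ** mprod ms" by (simp add: mprod_def)
lemma mprod_Nil: "mprod [] = mat 1" by (simp add: mprod_def)
lemma stab_mprod: "(\<forall>A\<in>set ms. stab A S) \<Longrightarrow> stab (mprod ms) S"
  by (induction ms) (auto simp: mprod_Cons mprod_Nil stab_mat1 stab_mult)

lemma stab_exp_coeff: "csubspace S \<Longrightarrow> (\<forall>s. 0 < s \<longrightarrow> stab (Hs s) S) \<Longrightarrow> stab (exp_coeff Hs r) S"
  unfolding exp_coeff_def
  apply (rule stab_sum, assumption, rule ballI)+
  apply (rule stab_cscale, assumption)
  apply (rule stab_mprod)
  apply (auto simp: compositions_def)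
  done

definition ee :: "'i \<Rightarrow> 'i \<Rightarrow> int" where "ee j = (\<lambda>k. if k = j then 1 else 0)"



locale qctx =
  fixes a :: "'i::finite \<Rightarrow> 'i \<Rightarrow> int" and d :: "'i \<Rightarrow> nat" and q :: complex
    and \<rho> :: "('i, 'n::finite) rep"
  assumes rep: "qloop_rep a d q \<rho>" and q0: "q \<noteq> 0"
    and nr: "\<forall>n::nat. 0 < n \<longrightarrow> q ^ n \<noteq> 1" and cart: "finite_type_cartan a d"
begin

abbreviation "K i \<equiv> \<rho> (Kg i)"
abbreviation "Ki i \<equiv> \<rho> (Kinv i)"
abbreviation "H i s \<equiv> \<rho> (Hg i s)"
abbreviation "XP i r \<equiv> \<rho> (Xp i r)"
abbreviation "XM i r \<equiv> \<rho> (Xm i r)"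
abbreviation "Q i \<equiv> qi q d i"

lemma Q0: "Q i \<noteq> 0" using q0 by (simp add: qi_def)

lemma KKi: "K i *v (Ki i *v x) = x" "Ki i *v (K i *v x) = x"
  using rep by (auto simp: qloop_rep_def matrix_vector_mul_assoc)

lemma KK: "K i *v (K j *v x) = K j *v (K i *v x)"
  using rep by (auto simp: qloop_rep_def matrix_vector_mul_assoc)

lemma K_XM: "K i *v (XM j r *v x) = (Q i powi (- a i j)) *s (XM j r *v (K i *v x))"
proof -
  have e: "K i ** XM j r ** Ki i = cscale (Q i powi (- a i j)) (XM j r)"
    using rep by (simp add: qloop_rep_def)
  have "K i *v (XM j r *v x) = K i *v (XM j r *v (Ki i *v (K i *v x)))" by (simp add: KKi)
  also have "\<dots> = (K i ** XM j r ** Ki i) *v (K i *v x)" by (simp only: matrix_vector_mul_assoc matrix_mul_assoc)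
  finally show ?thesis by (simp add: e cscale_mv)
qed

lemma Ki_XM: "Ki i *v (XM j r *v x) = (Q i powi (a i j)) *s (XM j r *v (Ki i *v x))"
proof -
  have "K i *v (XM j r *v (Ki i *v x)) = (Q i powi (- a i j)) *s (XM j r *v x)"
    by (simp add: K_XM KKi)
  then have "Ki i *v (K i *v (XM j r *v (Ki i *v x))) = (Q i powi (- a i j)) *s (Ki i *v (XM j r *v x))"
    by (simp add: vector_scalar_commute)
  then have "XM j r *v (Ki i *v x) = (Q i powi (- a i j)) *s (Ki i *v (XM j r *v x))"
    by (simp add: KKi)
  then have "(Q i powi (a i j)) *s (XM j r *v (Ki i *v x)) = (Q i powi (a i j) * Q i powi (- a i j)) *s (Ki i *v (XM j r *v x))"
    by (simp add: vector_smult_assoc)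
  also have "Q i powi (a i j) * Q i powi (- a i j) = 1"
    using Q0 by (simp add: power_int_minus field_simps)
  finally show ?thesis by simp
qed

lemma H_XM: "s \<noteq> 0 \<Longrightarrow> H i s *v (XM j r *v x) = XM j r *v (H i s *v x)
    - (qnum (Q i) (s * a i j) / of_int s) *s (XM j (r + s) *v x)"
proof -
  assume s: "s \<noteq> 0"
  have e: "H i s ** XM j r - XM j r ** H i s = cscale (- (qnum (Q i) (s * a i j) / of_int s)) (XM j (r + s))"
    using rep s by (simp add: qloop_rep_def)
  have "(H i s ** XM j r - XM j r ** H i s) *v x = H i s *v (XM j r *v x) - XM j r *v (H i s *v x)"
    by (simp add: matrix_vector_mult_diff_rdistrib matrix_vector_mul_assoc)
  then show ?thesis unfolding e cscale_mv by (simp add: vector_smult_lneg algebra_simps)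
qed

lemma XP_XM: "XP i r *v (XM j s *v x) = XM j s *v (XP i r *v x)
   + (if i = j then cscale (inverse (Q i - inverse (Q i))) (psi_plus q d \<rho> i (r + s) - psi_minus q d \<rho> i (r + s)) else 0) *v x"
proof -
  have e: "XP i r ** XM j s - XM j s ** XP i r = (if i = j then cscale (inverse (Q i - inverse (Q i)))
                           (psi_plus q d \<rho> i (r + s) - psi_minus q d \<rho> i (r + s)) else 0)"
    using rep by (simp add: qloop_rep_def)
  have "(XP i r ** XM j s - XM j s ** XP i r) *v x = XP i r *v (XM j s *v x) - XM j s *v (XP i r *v x)"
    by (simp add: matrix_vector_mult_diff_rdistrib matrix_vector_mul_assoc)
  then show ?thesis unfolding e by (simp add: algebra_simps)
qed


lemma valid_simps[simp]: "valid_gen (Kg i)" "valid_gen (Kinv i)" "valid_gen (Xp i r)" "valid_gen (Xm i r)"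
  "s \<noteq> 0 \<Longrightarrow> valid_gen (Hg i s)"
  by (auto simp: valid_gen_def)

lemma sub_cs: "submodule \<rho> W \<Longrightarrow> csubspace W" by (simp add: submodule_def)
lemma sub_gen: "submodule \<rho> W \<Longrightarrow> valid_gen g \<Longrightarrow> w \<in> W \<Longrightarrow> \<rho> g *v w \<in> W"
  by (simp add: submodule_def)

lemma nondeg: assumes "(n::'i\<Rightarrow>int) \<noteq> 0" shows "\<exists>i. (\<Sum>j\<in>UNIV. a i j * n j) \<noteq> 0"
proof (rule ccontr)
  assume "\<not> ?thesis"
  then have z: "\<And>i. (\<Sum>j\<in>UNIV. a i j * n j) = 0" by auto
  define x where "x = (\<lambda>i. real_of_int (n i))"
  have "x \<noteq> (\<lambda>_. 0)" using assms by (auto simp: x_def fun_eq_iff)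
  then have pos: "(\<Sum>i\<in>UNIV. \<Sum>j\<in>UNIV. x i * real (d i) * of_int (a i j) * x j) > 0"
    using cart by (simp add: finite_type_cartan_def)
  have "\<And>i. (\<Sum>j\<in>UNIV. x i * real (d i) * of_int (a i j) * x j) = x i * real (d i) * of_int (\<Sum>j\<in>UNIV. a i j * n j)"
    by (simp add: x_def sum_distrib_left mult.assoc)
  then have "(\<Sum>i\<in>UNIV. \<Sum>j\<in>UNIV. x i * real (d i) * of_int (a i j) * x j) = 0" by (simp add: z)
  with pos show False by simp
qed

lemma Q_pow_ne1: assumes "(m::int) \<noteq> 0" shows "Q i powi m \<noteq> 1"
proof
  assume h: "Q i powi m = 1"
  have dpos: "0 < d i" using cart by (simp add: finite_type_cartan_def)
  have "\<exists>k::nat. 0 < k \<and> Q i ^ k = 1"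
  proof (cases "m > 0")
    case True
    then have "Q i ^ nat m = 1" using h by (simp add: power_int_def)
    then show ?thesis using True by (intro exI[of _ "nat m"]) auto
  next
    case False
    then have "inverse (Q i ^ nat (- m)) = 1" using h assms by (simp add: power_int_def power_inverse)
    then have "Q i ^ nat (-m) = 1" by (metis inverse_1 inverse_inverse_eq)
    then show ?thesis using False assms by (intro exI[of _ "nat (-m)"]) auto
  qed
  then obtain k where "0 < k" "Q i ^ k = 1" by blast
  then have "q ^ (d i * k) = 1" by (simp add: qi_def power_mult)
  moreover have "0 < d i * k" using dpos \<open>0 < k\<close> by simp
  ultimately show False using nr by blast
qed

lemma char_ne: assumes "(n::'i\<Rightarrow>int) \<noteq> 0"
  shows "\<exists>i. Q i powi (\<mu> i - (\<Sum>j\<in>UNIV. a i j * n j)) \<noteq> Q i powi (\<mu> i)"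
proof -
  obtain i where S: "(\<Sum>j\<in>UNIV. a i j * n j) \<noteq> 0" using nondeg[OF assms] by blast
  have "Q i powi (\<mu> i - (\<Sum>j\<in>UNIV. a i j * n j)) = Q i powi (\<mu> i) * Q i powi (- (\<Sum>j\<in>UNIV. a i j * n j))"
    using Q0 by (simp add: power_int_add[symmetric])
  moreover have "Q i powi (- (\<Sum>j\<in>UNIV. a i j * n j)) \<noteq> 1" using Q_pow_ne1 S by simp
  moreover have "Q i powi (\<mu> i) \<noteq> 0" using Q0 by simp
  ultimately show ?thesis by (intro exI[of _ i]) auto
qed

lemma inv_smul_aux: "(e::complex) \<noteq> 0 \<Longrightarrow> inverse e *s (e *s z - c *s v) = z - (c / e) *s v"
  by (simp add: vector_ssub_ldistrib vector_smult_assoc divide_inverse mult.commute)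

definition hwmod :: "(complex^'n) set \<Rightarrow> complex^'n \<Rightarrow> ('i \<Rightarrow> int) \<Rightarrow> ('i \<Rightarrow> int \<Rightarrow> complex) \<Rightarrow> bool" where
  "hwmod W0 v \<mu> hv \<longleftrightarrow> submodule \<rho> W0 \<and> (\<forall>i. K i *v v - (Q i powi \<mu> i) *s v \<in> W0) \<and>
     (\<forall>i r. XP i r *v v \<in> W0) \<and> (\<forall>i s. s \<noteq> 0 \<longrightarrow> H i s *v v - hv i s *s v \<in> W0)"

inductive sg :: "(complex^'n) set \<Rightarrow> complex^'n \<Rightarrow> ('i \<Rightarrow> int) \<Rightarrow> complex^'n \<Rightarrow> bool" for W0 v where
  base: "w \<in> W0 \<Longrightarrow> sg W0 v n w"
| gen: "sg W0 v 0 v"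
| add: "sg W0 v n x \<Longrightarrow> sg W0 v n y \<Longrightarrow> sg W0 v n (x + y)"
| smul: "sg W0 v n x \<Longrightarrow> sg W0 v n (c *s x)"
| xm: "sg W0 v n x \<Longrightarrow> sg W0 v (n + ee j) (XM j r *v x)"

definition SS :: "(complex^'n) set \<Rightarrow> complex^'n \<Rightarrow> (complex^'n) set" where
  "SS W0 v = {z. \<exists>xs. (\<forall>p\<in>set xs. sg W0 v (snd p) (fst p)) \<and> z = sum_list (map fst xs)}"

context
  fixes W0 v \<mu> hv assumes hw: "hwmod W0 v \<mu> hv"
begin

lemma W0sub: "submodule \<rho> W0" using hw by (simp add: hwmod_def)
lemma W0cs: "csubspace W0" using W0sub sub_cs by blast

lemma sg_cs: "csubspace {x. sg W0 v n x}"
  unfolding csubspace_def using W0cs by (auto intro: sg.intros cs_0)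

lemma sg_diff: "sg W0 v n x \<Longrightarrow> sg W0 v n y \<Longrightarrow> sg W0 v n (x - y)"
  using cs_diff[OF sg_cs] by auto

lemma Ki_v: "Ki i *v v - inverse (Q i powi \<mu> i) *s v \<in> W0"
proof -
  let ?l = "Q i powi \<mu> i"
  have l0: "?l \<noteq> 0" using Q0 by simp
  have "Ki i *v (K i *v v - ?l *s v) \<in> W0"
    using hw W0sub by (auto simp: hwmod_def intro: sub_gen)
  then have "v - ?l *s (Ki i *v v) \<in> W0" by (simp add: KKi matrix_vector_mult_diff_distrib vector_scalar_commute)
  then have "(- inverse ?l) *s (v - ?l *s (Ki i *v v)) \<in> W0" by (rule cs_smul[OF W0cs])
  also have "(- inverse ?l) *s (v - ?l *s (Ki i *v v)) = Ki i *v v - inverse ?l *s v"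
    using l0 by (simp add: vec_eq_iff algebra_simps)
  finally show ?thesis .
qed

lemma sg_K: "sg W0 v n x \<Longrightarrow> sg W0 v n (K i *v x)"
proof (induction rule: sg.induct)
  case (base w n) then show ?case by (intro sg.base sub_gen[OF W0sub]) simp_all
next
  case gen
  have "K i *v v = (K i *v v - (Q i powi \<mu> i) *s v) + (Q i powi \<mu> i) *s v" by simp
  then show ?case using hw by (metis hwmod_def sg.add sg.base sg.gen sg.smul)
next
  case (add n x y) then show ?case by (simp add: matrix_vector_right_distrib sg.add)
next
  case (smul n x c) then show ?case by (simp add: vector_scalar_commute sg.smul)
next
  case (xm n x j r) then show ?case by (subst K_XM) (intro sg.smul sg.xm)
qed

lemma sg_Ki: "sg W0 v n x \<Longrightarrow> sg W0 v n (Ki i *v x)"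
proof (induction rule: sg.induct)
  case (base w n) then show ?case by (intro sg.base sub_gen[OF W0sub]) simp_all
next
  case gen
  have "Ki i *v v = (Ki i *v v - inverse (Q i powi \<mu> i) *s v) + inverse (Q i powi \<mu> i) *s v" by simp
  then show ?case using Ki_v by (metis sg.add sg.base sg.gen sg.smul)
next
  case (add n x y) then show ?case by (simp add: matrix_vector_right_distrib sg.add)
next
  case (smul n x c) then show ?case by (simp add: vector_scalar_commute sg.smul)
next
  case (xm n x j r) then show ?case by (subst Ki_XM) (intro sg.smul sg.xm)
qed

lemma sg_H: assumes s0: "s \<noteq> 0" shows "sg W0 v n x \<Longrightarrow> sg W0 v n (H i s *v x)"
proof (induction rule: sg.induct)
  case (base w n) then show ?case using s0 by (intro sg.base sub_gen[OF W0sub]) simp_all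
next
  case gen
  have "H i s *v v = (H i s *v v - hv i s *s v) + hv i s *s v" by simp
  then show ?case using hw s0 by (metis hwmod_def sg.add sg.base sg.gen sg.smul)
next
  case (add n x y) then show ?case by (simp add: matrix_vector_right_distrib sg.add)
next
  case (smul n x c) then show ?case by (simp add: vector_scalar_commute sg.smul)
next
  case (xm n x j r) then show ?case by (subst H_XM[OF s0]) (intro sg_diff sg.smul sg.xm)
qed

lemma stab_sg_psi: "stab (psi_plus q d \<rho> i m) {x. sg W0 v n x}" "stab (psi_minus q d \<rho> i m) {x. sg W0 v n x}"
proof -
  have sK: "stab (K i) {x. sg W0 v n x}" "stab (Ki i) {x. sg W0 v n x}" by (auto simp: stab_def sg_K sg_Ki)
  have sH: "\<And>c. \<forall>s. 0 < s \<longrightarrow> stab (cscale c (H i (int s))) {x. sg W0 v n x}"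
     "\<And>c. \<forall>s. 0 < s \<longrightarrow> stab (cscale c (H i (- int s))) {x. sg W0 v n x}"
    by (auto simp: stab_def cscale_mv intro!: sg.smul sg_H)
  show "stab (psi_plus q d \<rho> i m) {x. sg W0 v n x}"
    unfolding psi_plus_def using sK sH sg_cs
    by (auto intro!: stab_mult stab_exp_coeff stab_zero)
  show "stab (psi_minus q d \<rho> i m) {x. sg W0 v n x}"
    unfolding psi_minus_def using sK sH sg_cs
    by (auto intro!: stab_mult stab_exp_coeff stab_zero)
qed


lemma sg_XP: "sg W0 v n x \<Longrightarrow> sg W0 v (n - ee i) (XP i r *v x)"
proof (induction rule: sg.induct)
  case (base w n) then show ?case by (intro sg.base sub_gen[OF W0sub]) simp_all
next
  case gen then show ?case using hw by (simp add: hwmod_def sg.base)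
next
  case (add n x y) then show ?case by (simp add: matrix_vector_right_distrib sg.add)
next
  case (smul n x c) then show ?case by (simp add: vector_scalar_commute sg.smul)
next
  case (xm n x j s)
  have e1: "n + ee j - ee i = (n - ee i) + ee j" by (simp add: algebra_simps)
  have A: "sg W0 v (n + ee j - ee i) (XM j s *v (XP i r *v x))"
    unfolding e1 by (rule sg.xm[OF xm.IH])
  have B: "sg W0 v (n + ee j - ee i) ((if i = j then cscale (inverse (Q i - inverse (Q i))) (psi_plus q d \<rho> i (r + s) - psi_minus q d \<rho> i (r + s)) else 0) *v x)"
  proof (cases "i = j")
    case True
    then have e2: "n + ee j - ee i = n" by simp
    have "stab (cscale (inverse (Q i - inverse (Q i))) (psi_plus q d \<rho> i (r + s) - psi_minus q d \<rho> i (r + s))) {x. sg W0 v n x}"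
      by (intro stab_cscale stab_diff sg_cs stab_sg_psi)
    then show ?thesis using True xm.hyps unfolding e2 by (simp add: stab_def)
  next
    case False then show ?thesis by (simp add: sg.base cs_0[OF W0cs])
  qed
  show ?case by (subst XP_XM) (rule sg.add[OF A B])
qed

lemma sum_ee: "(\<Sum>k\<in>UNIV. a i k * (n + ee j) k) = (\<Sum>k\<in>UNIV. a i k * n k) + a i j"
proof -
  have "(\<Sum>k\<in>UNIV. a i k * ee j k) = (\<Sum>k\<in>UNIV. if k = j then a i k else 0)"
    by (rule sum.cong) (auto simp: ee_def)
  also have "\<dots> = a i j" by simp
  finally have e: "(\<Sum>k\<in>UNIV. a i k * ee j k) = a i j" .
  have "(\<Sum>k\<in>UNIV. a i k * (n + ee j) k) = (\<Sum>k\<in>UNIV. a i k * n k + a i k * ee j k)"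
    by (simp add: distrib_left)
  also have "\<dots> = (\<Sum>k\<in>UNIV. a i k * n k) + a i j" by (simp only: sum.distrib e)
  finally show ?thesis .
qed

lemma sg_wt: "sg W0 v n x \<Longrightarrow> K i *v x - (Q i powi (\<mu> i - (\<Sum>j\<in>UNIV. a i j * n j))) *s x \<in> W0"
proof (induction rule: sg.induct)
  case (base w n)
  have "K i *v w \<in> W0" by (intro sub_gen[OF W0sub] base) simp
  then show ?case using base by (intro cs_diff[OF W0cs] cs_smul[OF W0cs])
next
  case gen then show ?case using hw by (simp add: hwmod_def)
next
  case (add n x y)
  have eq: "K i *v (x + y) - (Q i powi (\<mu> i - (\<Sum>j\<in>UNIV. a i j * n j))) *s (x + y) =
    (K i *v x - (Q i powi (\<mu> i - (\<Sum>j\<in>UNIV. a i j * n j))) *s x) + (K i *v y - (Q i powi (\<mu> i - (\<Sum>j\<in>UNIV. a i j * n j))) *s y)"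
    by (simp add: matrix_vector_right_distrib vec_eq_iff algebra_simps)
  show ?case unfolding eq by (rule cs_add[OF W0cs add.IH(1) add.IH(2)])
next
  case (smul n x c)
  have eq: "K i *v (c *s x) - (Q i powi (\<mu> i - (\<Sum>j\<in>UNIV. a i j * n j))) *s (c *s x) =
    c *s (K i *v x - (Q i powi (\<mu> i - (\<Sum>j\<in>UNIV. a i j * n j))) *s x)"
    by (simp add: vector_scalar_commute vec_eq_iff algebra_simps)
  show ?case unfolding eq by (rule cs_smul[OF W0cs smul.IH])
next
  case (xm n x j r)
  let ?l = "Q i powi (\<mu> i - (\<Sum>j\<in>UNIV. a i j * n j))"
  let ?c = "Q i powi (- a i j)"
  have lam: "Q i powi (\<mu> i - (\<Sum>k\<in>UNIV. a i k * (n + ee j) k)) = ?c * ?l"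
    unfolding sum_ee using Q0 by (simp add: power_int_add[symmetric] algebra_simps)
  have "K i *v (XM j r *v x) - (?c * ?l) *s (XM j r *v x) = ?c *s (XM j r *v (K i *v x - ?l *s x))"
    by (simp add: K_XM matrix_vector_mult_diff_distrib vector_scalar_commute vec_eq_iff algebra_simps)
  moreover have "XM j r *v (K i *v x - ?l *s x) \<in> W0" by (intro sub_gen[OF W0sub] xm.IH) simp
  ultimately show ?case unfolding lam by (simp add: cs_smul[OF W0cs])
qed

lemma sg_nonneg: "sg W0 v n x \<Longrightarrow> (\<forall>i. 0 \<le> n i) \<or> x \<in> W0"
proof (induction rule: sg.induct)
  case (add n x y) then show ?case by (auto intro: cs_add[OF W0cs])
next
  case (smul n x c) then show ?case by (auto intro: cs_smul[OF W0cs])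
next
  case (xm n x j r)
  then show ?case by (auto simp: ee_def sub_gen[OF W0sub])
qed auto

lemma sg_zero: "sg W0 v n x \<Longrightarrow> n = 0 \<Longrightarrow> \<exists>c. x - c *s v \<in> W0"
proof (induction rule: sg.induct)
  case (base w n) then show ?case by (intro exI[of _ 0]) simp
next
  case gen then show ?case by (intro exI[of _ 1]) (simp add: cs_0[OF W0cs])
next
  case (add n x y)
  then obtain c1 c2 where "x - c1 *s v \<in> W0" "y - c2 *s v \<in> W0" by blast
  then have "(x - c1 *s v) + (y - c2 *s v) \<in> W0" by (rule cs_add[OF W0cs])
  then show ?case by (intro exI[of _ "c1 + c2"]) (simp add: vector_sadd_rdistrib algebra_simps)
next
  case (smul n x c)
  then obtain c1 where "x - c1 *s v \<in> W0" by blast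
  then have "c *s (x - c1 *s v) \<in> W0" by (rule cs_smul[OF W0cs])
  then show ?case by (intro exI[of _ "c * c1"]) (simp add: vector_ssub_ldistrib vector_smult_assoc)
next
  case (xm n x j r)
  then have "n j = -1" by (simp add: fun_eq_iff ee_def) (metis add.commute add_eq_0_iff)
  then have "\<not> 0 \<le> n j" by simp
  then have "x \<in> W0" using sg_nonneg[OF xm.hyps] by blast
  then show ?case by (intro exI[of _ 0]) (simp add: sub_gen[OF W0sub])
qed

lemma mv_sum_list: "M *v sum_list (map fst xs) = sum_list (map fst (map (\<lambda>p. (M *v fst p, f (snd p))) xs))"
  by (induction xs) (auto simp: matrix_vector_right_distrib)

lemma SS_cs: "csubspace (SS W0 v)"
  unfolding csubspace_def SS_def
proof (intro conjI allI ballI)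
  show "0 \<in> {z. \<exists>xs. (\<forall>p\<in>set xs. sg W0 v (snd p) (fst p)) \<and> z = sum_list (map fst xs)}"
    by (auto intro: exI[of _ "[]"])
next
  fix x y assume "x \<in> {z. \<exists>xs. (\<forall>p\<in>set xs. sg W0 v (snd p) (fst p)) \<and> z = sum_list (map fst xs)}"
    "y \<in> {z. \<exists>xs. (\<forall>p\<in>set xs. sg W0 v (snd p) (fst p)) \<and> z = sum_list (map fst xs)}"
  then obtain xs ys where "\<forall>p\<in>set xs. sg W0 v (snd p) (fst p)" "x = sum_list (map fst xs)"
    "\<forall>p\<in>set ys. sg W0 v (snd p) (fst p)" "y = sum_list (map fst ys)" by auto
  then show "x + y \<in> {z. \<exists>xs. (\<forall>p\<in>set xs. sg W0 v (snd p) (fst p)) \<and> z = sum_list (map fst xs)}"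
    by (intro CollectI exI[of _ "xs @ ys"]) force
next
  fix c x assume "x \<in> {z. \<exists>xs. (\<forall>p\<in>set xs. sg W0 v (snd p) (fst p)) \<and> z = sum_list (map fst xs)}"
  then obtain xs where h: "\<forall>p\<in>set xs. sg W0 v (snd p) (fst p)" "x = sum_list (map fst xs)" by auto
  have "c *s sum_list (map fst xs) = sum_list (map fst (map (\<lambda>p. (c *s fst p, snd p)) xs))"
    by (induction xs) (auto simp: vector_add_ldistrib)
  then show "c *s x \<in> {z. \<exists>xs. (\<forall>p\<in>set xs. sg W0 v (snd p) (fst p)) \<and> z = sum_list (map fst xs)}"
    using h by (auto intro!: exI[of _ "map (\<lambda>p. (c *s fst p, snd p)) xs"] sg.smul)
qed

lemma SS_map: assumes "\<And>n x. sg W0 v n x \<Longrightarrow> sg W0 v (f n) (M *v x)" and "z \<in> SS W0 v"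
  shows "M *v z \<in> SS W0 v"
proof -
  obtain xs where h: "\<forall>p\<in>set xs. sg W0 v (snd p) (fst p)" "z = sum_list (map fst xs)"
    using assms(2) by (auto simp: SS_def)
  show ?thesis unfolding SS_def h(2) mv_sum_list[where f=f]
    by (intro CollectI exI[of _ "map (\<lambda>p. (M *v fst p, f (snd p))) xs"]) (use h(1) assms(1) in force)
qed

lemma SS_sub: "submodule \<rho> (SS W0 v)"
  unfolding submodule_def
proof (intro conjI SS_cs allI impI ballI)
  fix g :: "'i gen" and z assume g: "valid_gen g" and z: "z \<in> SS W0 v"
  show "\<rho> g *v z \<in> SS W0 v"
  proof (cases g)
    case (Xp i r) then show ?thesis using SS_map[OF sg_XP z] by simp
  next
    case (Xm j r) then show ?thesis using SS_map[OF sg.xm z] by simp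
  next
    case (Hg i s) then have "s \<noteq> 0" using g by (auto simp: valid_gen_def)
    then show ?thesis using SS_map[OF sg_H z, where f="\<lambda>n. n"] Hg by simp
  next
    case (Kg i) then show ?thesis using SS_map[OF sg_K z, where f="\<lambda>n. n"] by simp
  next
    case (Kinv i) then show ?thesis using SS_map[OF sg_Ki z, where f="\<lambda>n. n"] by simp
  qed
qed

lemma SS_v: "v \<in> SS W0 v"
  unfolding SS_def by (auto intro!: exI[of _ "[(v, 0)]"] sg.gen)

lemma SS_W0: "W0 \<subseteq> SS W0 v"
  unfolding SS_def by (auto intro!: exI[of _ "[(w, 0)]" for w] sg.base)

lemma sg_le: assumes "submodule \<rho> U" "W0 \<subseteq> U" "v \<in> U" shows "sg W0 v n x \<Longrightarrow> x \<in> U"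
proof (induction rule: sg.induct)
  case (add n x y) then show ?case using cs_add[OF sub_cs[OF assms(1)]] by blast
next
  case (smul n x c) then show ?case using cs_smul[OF sub_cs[OF assms(1)]] by blast
next
  case (xm n x j r) then show ?case by (intro sub_gen[OF assms(1)]) simp_all
qed (use assms in auto)

lemma SS_le: assumes "submodule \<rho> U" "W0 \<subseteq> U" "v \<in> U" shows "SS W0 v \<subseteq> U"
proof
  fix z assume "z \<in> SS W0 v"
  then obtain xs where h: "\<forall>p\<in>set xs. sg W0 v (snd p) (fst p)" "z = sum_list (map fst xs)"
    by (auto simp: SS_def)
  have "\<forall>x\<in>set (map fst xs). x \<in> U" using h(1) sg_le[OF assms] by auto
  then show "z \<in> U" using h(2) cs_sum_list[OF sub_cs[OF assms(1)]] by simp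
qed

lemma hw_key0: "length xs = N \<Longrightarrow> \<forall>p\<in>set xs. sg W0 v (snd p) (fst p) \<Longrightarrow> (\<forall>i. K i *v z - (Q i powi \<mu> i) *s z \<in> W0) \<Longrightarrow>
   z - sum_list (map fst xs) \<in> W0 \<Longrightarrow> \<exists>c. z - c *s v \<in> W0"
proof (induction N arbitrary: xs z)
  case 0 then show ?case by (intro exI[of _ 0]) simp
next
  case (Suc N)
  obtain p xs' where xsd: "xs = p # xs'" using Suc.prems(1) by (cases xs) auto
  have len: "length xs' = N" using Suc.prems(1) xsd by simp
  have lenT: "\<And>f. length (map f xs') = N" using len by simp
  have Cprems: "\<forall>p\<in>set (p # xs'). sg W0 v (snd p) (fst p)" "\<forall>i. K i *v z - (Q i powi \<mu> i) *s z \<in> W0"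
     "z - sum_list (map fst (p # xs')) \<in> W0" using Suc.prems xsd by auto
  note IH = Suc.IH
  obtain x n where p: "p = (x, n)" by fastforce
  have sx: "sg W0 v n x" using Cprems p by simp
  have sxs: "\<forall>p\<in>set xs'. sg W0 v (snd p) (fst p)" using Cprems by simp
  show ?case
  proof (cases "n = 0")
    case True
    obtain c0 where c0: "x - c0 *s v \<in> W0" using sg_zero[OF sx True] by blast
    have xw: "K i *v x - (Q i powi \<mu> i) *s x \<in> W0" for i using sg_wt[OF sx] True by simp
    have "K i *v (z - x) - (Q i powi \<mu> i) *s (z - x) \<in> W0" for i
    proof -
      have eq: "K i *v (z - x) - (Q i powi \<mu> i) *s (z - x) = (K i *v z - (Q i powi \<mu> i) *s z) - (K i *v x - (Q i powi \<mu> i) *s x)"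
        by (simp add: matrix_vector_mult_diff_distrib vec_eq_iff algebra_simps)
      show ?thesis unfolding eq using Cprems(2) xw by (simp add: cs_diff[OF W0cs])
    qed
    moreover have "(z - x) - sum_list (map fst xs') \<in> W0" using Cprems(3) p by (simp add: algebra_simps)
    ultimately obtain c where c: "(z - x) - c *s v \<in> W0" using IH[OF len sxs] by blast
    have "((z - x) - c *s v) + (x - c0 *s v) \<in> W0" using c c0 by (rule cs_add[OF W0cs])
    then show ?thesis by (intro exI[of _ "c + c0"]) (simp add: vector_sadd_rdistrib algebra_simps)
  next
    case False
    obtain i where ine: "Q i powi (\<mu> i - (\<Sum>j\<in>UNIV. a i j * n j)) \<noteq> Q i powi (\<mu> i)"
      using char_ne[OF False] by blast
    let ?l = "Q i powi (\<mu> i - (\<Sum>j\<in>UNIV. a i j * n j))"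
    let ?T = "\<lambda>y. K i *v y - ?l *s y"
    have Tsg: "\<forall>p\<in>set (map (\<lambda>p. (?T (fst p), snd p)) xs'). sg W0 v (snd p) (fst p)"
      using sxs by (auto intro!: sg_diff sg_K sg.smul)
    have TW: "y \<in> W0 \<Longrightarrow> ?T y \<in> W0" for y
      by (intro cs_diff[OF W0cs] cs_smul[OF W0cs] sub_gen[OF W0sub]) simp_all
    have Tsum: "?T (sum_list (map fst ys)) = sum_list (map fst (map (\<lambda>p. (?T (fst p), snd p)) ys))" for ys
      by (induction ys) (auto simp: matrix_vector_right_distrib vec_eq_iff algebra_simps)
    have eqT: "?T z - sum_list (map fst (map (\<lambda>p. (?T (fst p), snd p)) xs')) = ?T (z - sum_list (map fst (p # xs'))) + ?T x"
      unfolding Tsum[symmetric] using p by (simp add: matrix_vector_mult_diff_distrib matrix_vector_right_distrib vec_eq_iff algebra_simps)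
    have Tx: "?T x \<in> W0" using sg_wt[OF sx] by simp
    have "?T (z - sum_list (map fst (p # xs'))) + ?T x \<in> W0"
      by (rule cs_add[OF W0cs TW[OF Cprems(3)] Tx])
    then have m3: "?T z - sum_list (map fst (map (\<lambda>p. (?T (fst p), snd p)) xs')) \<in> W0"
      by (simp only: eqT)
    have m2: "K k *v (?T z) - (Q k powi \<mu> k) *s (?T z) \<in> W0" for k
    proof -
      have eq: "K k *v (?T z) - (Q k powi \<mu> k) *s (?T z) = ?T (K k *v z - (Q k powi \<mu> k) *s z)"
        by (simp add: KK matrix_vector_mult_diff_distrib vector_scalar_commute vec_eq_iff algebra_simps)
      show ?thesis unfolding eq using TW Cprems(2) by blast
    qed
    obtain c where c: "?T z - c *s v \<in> W0" using IH[OF lenT Tsg allI[OF m2] m3] by blast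
    let ?m = "Q i powi \<mu> i"
    have m4: "?T z - c *s v - (K i *v z - ?m *s z) \<in> W0"
      using cs_diff[OF W0cs c] Cprems(2) by blast
    have eq4: "?T z - c *s v - (K i *v z - ?m *s z) = (?m - ?l) *s z - c *s v"
      by (simp add: vec_eq_iff algebra_simps)
    have "(?m - ?l) *s z - c *s v \<in> W0" using m4 unfolding eq4 .
    then have "inverse (?m - ?l) *s ((?m - ?l) *s z - c *s v) \<in> W0" by (rule cs_smul[OF W0cs])
    moreover have "inverse (?m - ?l) *s ((?m - ?l) *s z - c *s v) = z - (c / (?m - ?l)) *s v"
      using ine by (intro inv_smul_aux) simp
    ultimately show ?thesis by auto
  qed
qed


lemma hw_key: "\<forall>p\<in>set xs. sg W0 v (snd p) (fst p) \<Longrightarrow> (\<forall>i. K i *v z - (Q i powi \<mu> i) *s z \<in> W0) \<Longrightarrow>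
   z - sum_list (map fst xs) \<in> W0 \<Longrightarrow> \<exists>c. z - c *s v \<in> W0"
  using hw_key0 by blast

lemma SS_hw: "z \<in> SS W0 v \<Longrightarrow> (\<forall>i. K i *v z - (Q i powi \<mu> i) *s z \<in> W0) \<Longrightarrow> \<exists>c. z - c *s v \<in> W0"
  unfolding SS_def using hw_key by (auto simp: cs_0[OF W0cs])

end

end


context qctx begin

lemma sub_zero: "submodule \<rho> {0}"
  by (simp add: submodule_def csubspace_def)

lemma sub_UNIV: "submodule \<rho> UNIV"
  by (simp add: submodule_def csubspace_def)

lemma sub_inter: "submodule \<rho> A \<Longrightarrow> submodule \<rho> B \<Longrightarrow> submodule \<rho> (A \<inter> B)"
  by (simp add: submodule_def csubspace_def)

definition ssum :: "(complex^'n) set \<Rightarrow> (complex^'n) set \<Rightarrow> (complex^'n) set" where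
  "ssum A B = {x + y | x y. x \<in> A \<and> y \<in> B}"

lemma sub_ssum: assumes A: "submodule \<rho> A" and B: "submodule \<rho> B" shows "submodule \<rho> (ssum A B)"
  unfolding submodule_def csubspace_def
proof (intro conjI allI impI ballI)
  have "0 \<in> A" "0 \<in> B" using A B by (simp_all add: submodule_def csubspace_def)
  then show "0 \<in> ssum A B" unfolding ssum_def by force
next
  fix x y assume "x \<in> ssum A B" "y \<in> ssum A B"
  then obtain x1 x2 y1 y2 where "x1 \<in> A" "x2 \<in> B" "x = x1 + x2" "y1 \<in> A" "y2 \<in> B" "y = y1 + y2"
    unfolding ssum_def by blast
  moreover have "x1 + y1 \<in> A" using cs_add[OF sub_cs[OF A]] calculation by simp
  moreover have "x2 + y2 \<in> B" using cs_add[OF sub_cs[OF B]] calculation by simp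
  ultimately show "x + y \<in> ssum A B" unfolding ssum_def
    by (intro CollectI exI[of _ "x1 + y1"] exI[of _ "x2 + y2"]) (simp add: algebra_simps)
next
  fix c x assume "x \<in> ssum A B"
  then obtain x1 x2 where "x1 \<in> A" "x2 \<in> B" "x = x1 + x2" unfolding ssum_def by blast
  moreover have "c *s x1 \<in> A" using cs_smul[OF sub_cs[OF A]] calculation by simp
  moreover have "c *s x2 \<in> B" using cs_smul[OF sub_cs[OF B]] calculation by simp
  ultimately show "c *s x \<in> ssum A B" unfolding ssum_def
    by (intro CollectI exI[of _ "c *s x1"] exI[of _ "c *s x2"]) (simp add: vector_add_ldistrib)
next
  fix g :: "'i gen" and x assume g: "valid_gen g" and "x \<in> ssum A B"
  then obtain x1 x2 where "x1 \<in> A" "x2 \<in> B" "x = x1 + x2" unfolding ssum_def by blast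
  moreover have "\<rho> g *v x1 \<in> A" using sub_gen[OF A g] calculation by simp
  moreover have "\<rho> g *v x2 \<in> B" using sub_gen[OF B g] calculation by simp
  ultimately show "\<rho> g *v x \<in> ssum A B" unfolding ssum_def
    by (intro CollectI exI[of _ "\<rho> g *v x1"] exI[of _ "\<rho> g *v x2"]) (simp add: matrix_vector_right_distrib)
qed

lemma ssum_left: "submodule \<rho> B \<Longrightarrow> A \<subseteq> ssum A B"
proof
  fix x assume "submodule \<rho> B" "x \<in> A"
  then have "0 \<in> B" "x = x + 0" by (simp_all add: cs_0 sub_cs)
  then show "x \<in> ssum A B" using \<open>x \<in> A\<close> unfolding ssum_def by blast
qed
lemma ssum_right: "submodule \<rho> A \<Longrightarrow> B \<subseteq> ssum A B"
proof
  fix x assume "submodule \<rho> A" "x \<in> B"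
  then have "0 \<in> A" "x = 0 + x" by (simp_all add: cs_0 sub_cs)
  then show "x \<in> ssum A B" using \<open>x \<in> B\<close> unfolding ssum_def by blast
qed

lemma ws_iff: "z \<in> weight_space q d \<rho> \<mu> \<longleftrightarrow> (\<forall>i. K i *v z = (Q i powi \<mu> i) *s z)"
  by (simp add: weight_space_def)

lemma hlw_hwmod: assumes "hlw_vector q d \<rho> \<mu> u"
  obtains c where "hwmod {0} u \<mu> c" "\<forall>i s. s \<noteq> 0 \<longrightarrow> H i s *v u = c i s *s u" "u \<noteq> 0"
proof -
  from assms obtain c where u0: "u \<noteq> 0" and hc: "\<forall>i s. s \<noteq> 0 \<longrightarrow> H i s *v u = c i s *s u"
    and w: "u \<in> weight_space q d \<rho> \<mu>" and x: "\<forall>i r. XP i r *v u = 0"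
    unfolding hlw_vector_def ell_weight_vector_def by blast
  have "hwmod {0} u \<mu> c" unfolding hwmod_def using sub_zero hc w x by (simp add: weight_space_def)
  then show ?thesis using that hc u0 by blast
qed

lemma sq0_hlw: assumes "subquot_is_V q d \<rho> \<pi> {0} U"
  obtains u hv where "u \<in> U" "hlw_vector q d \<rho> (wt \<pi>) u" "ell_weight_of q d \<pi> hv"
    "\<forall>i s. s \<noteq> 0 \<longrightarrow> H i s *v u = hv i s *s u"
proof -
  have ex: "\<exists>v\<in>U - {0}. \<exists>hv. ell_weight_of q d \<pi> hv \<and>
        (\<forall>i. K i *v v - (Q i powi wt \<pi> i) *s v \<in> {0}) \<and>
        (\<forall>i r. XP i r *v v \<in> {0}) \<and>
        (\<forall>i s. s \<noteq> 0 \<longrightarrow> H i s *v v - hv i s *s v \<in> {0})"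
    using assms unfolding subquot_is_V_def by (elim conjE) assumption
  from ex obtain u hv where u: "u \<in> U - {0}" "ell_weight_of q d \<pi> hv"
        "\<forall>i. K i *v u - (Q i powi wt \<pi> i) *s u \<in> {0}"
        "\<forall>i r. XP i r *v u \<in> {0}"
        "\<forall>i s. s \<noteq> 0 \<longrightarrow> H i s *v u - hv i s *s u \<in> {0}"
    by (elim bexE exE conjE) (rule that, assumption+)
  have "ell_weight_vector \<rho> u" unfolding ell_weight_vector_def using u by (intro conjI exI[of _ hv]) auto
  moreover have "u \<in> weight_space q d \<rho> (wt \<pi>)" unfolding weight_space_def using u(3) by simp
  moreover have "\<forall>i r. XP i r *v u = 0" using u(4) by simp
  ultimately have "hlw_vector q d \<rho> (wt \<pi>) u" unfolding hlw_vector_def by blast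
  moreover have "\<forall>i s. s \<noteq> 0 \<longrightarrow> H i s *v u = hv i s *s u" using u(5) by auto
  ultimately show ?thesis using that u by blast
qed


lemma main:
  assumes se: "self_extension q d \<rho> \<pi>"
  shows "(\<not> trivial_self_extension q d \<rho> \<pi> \<longleftrightarrow>
           (\<exists>v. hlw_vector q d \<rho> (wt \<pi>) v \<and>
              (\<forall>w. hlw_vector q d \<rho> (wt \<pi>) w \<longrightarrow> (\<exists>c. w = c *s v)))) \<and>
         (\<not> trivial_self_extension q d \<rho> \<pi> \<longrightarrow>
           (\<forall>v. v \<in> weight_space q d \<rho> (wt \<pi>) \<and> v \<noteq> 0 \<and> \<not> ell_weight_vector \<rho> v \<longrightarrow>
              generated_submodule \<rho> v = UNIV))"
proof -
  obtain U where sq1: "subquot_is_V q d \<rho> \<pi> {0} U" and sq2: "subquot_is_V q d \<rho> \<pi> U UNIV"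
    using se unfolding self_extension_def by blast
  have subU: "submodule \<rho> U" using sq1 unfolding subquot_is_V_def by (elim conjE)
  have U0: "0 \<in> U" using subU by (simp add: sub_cs cs_0)
  have simpU': "\<forall>U'. submodule \<rho> U' \<and> {0} \<subseteq> U' \<and> U' \<subseteq> U \<longrightarrow> U' = {0} \<or> U' = U"
    using sq1 unfolding subquot_is_V_def by (elim conjE)
  have simpU: "U' = {0} \<or> U' = U" if "submodule \<rho> U'" "U' \<subseteq> U" for U'
  proof -
    have "0 \<in> U'" using that(1) by (simp add: sub_cs cs_0)
    then show ?thesis using simpU' that by blast
  qed
  have simp2': "\<forall>U'. submodule \<rho> U' \<and> U \<subseteq> U' \<and> U' \<subseteq> UNIV \<longrightarrow> U' = U \<or> U' = UNIV"
    using sq2 unfolding subquot_is_V_def by (elim conjE)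
  have simp2: "U' = U \<or> U' = UNIV" if "submodule \<rho> U'" "U \<subseteq> U'" for U'
    using simp2' that by blast
  have ex2: "\<exists>v\<in>UNIV - U. \<exists>hv. ell_weight_of q d \<pi> hv \<and>
        (\<forall>i. K i *v v - (Q i powi wt \<pi> i) *s v \<in> U) \<and>
        (\<forall>i r. XP i r *v v \<in> U) \<and>
        (\<forall>i s. s \<noteq> 0 \<longrightarrow> H i s *v v - hv i s *s v \<in> U)"
    using sq2 unfolding subquot_is_V_def by (elim conjE) assumption
  from ex2 obtain v2 hv2 where v2: "v2 \<notin> U" "ell_weight_of q d \<pi> hv2"
        "\<forall>i. K i *v v2 - (Q i powi wt \<pi> i) *s v2 \<in> U"
        "\<forall>i r. XP i r *v v2 \<in> U"
        "\<forall>i s. s \<noteq> 0 \<longrightarrow> H i s *v v2 - hv2 i s *s v2 \<in> U"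
    by (elim bexE exE conjE) (rule that, simp_all)
  have hw2: "hwmod U v2 (wt \<pi>) hv2" unfolding hwmod_def using subU v2 by blast
  obtain v1 hv1 where v1: "v1 \<in> U" "hlw_vector q d \<rho> (wt \<pi>) v1" by (rule sq0_hlw[OF sq1])
  obtain c1 where hw1: "hwmod {0} v1 (wt \<pi>) c1" and hc1: "\<forall>i s. s \<noteq> 0 \<longrightarrow> H i s *v v1 = c1 i s *s v1"
    and v10: "v1 \<noteq> 0" by (rule hlw_hwmod[OF v1(2)])
  have SS1: "SS {0} v1 = U"
  proof -
    have le: "SS {0} v1 \<subseteq> U" by (rule SS_le[OF hw1 subU]) (use U0 v1 in auto)
    have "SS {0} v1 \<noteq> {0}" using SS_v[OF hw1] v10 by auto
    then show ?thesis using simpU[OF SS_sub[OF hw1] le] by blast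
  qed
  have FactA: "\<exists>c. z = c *s v1" if zU: "z \<in> U" and zw: "z \<in> weight_space q d \<rho> (wt \<pi>)" for z
  proof -
    have "\<forall>i. K i *v z - (Q i powi wt \<pi> i) *s z \<in> {0}" using zw by (simp add: weight_space_def)
    then obtain c where "z - c *s v1 \<in> {0}" using SS_hw[OF hw1] zU SS1 by blast
    then show ?thesis by auto
  qed
  have SS2: "SS U v2 = UNIV"
  proof -
    have "SS U v2 \<noteq> U" using SS_v[OF hw2] v2(1) by auto
    then show ?thesis using simp2[OF SS_sub[OF hw2] SS_W0[OF hw2]] by blast
  qed
  have FactB: "\<exists>c. z - c *s v2 \<in> U" if "z \<in> weight_space q d \<rho> (wt \<pi>)" for z
  proof -
    have "\<forall>i. K i *v z - (Q i powi wt \<pi> i) *s z \<in> U" using that U0 by (simp add: weight_space_def)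
    then show ?thesis using SS_hw[OF hw2] SS2 by blast
  qed
  have Heig: "H i s *v z - hv2 i s *s z \<in> U" if "s \<noteq> 0" "z - c *s v2 \<in> U" for i s z c
  proof -
    have "H i s *v (z - c *s v2) \<in> U" using that by (intro sub_gen[OF subU]) simp_all
    moreover have "c *s (H i s *v v2 - hv2 i s *s v2) \<in> U" using v2(5) that(1) cs_smul[OF sub_cs[OF subU]] by blast
    moreover have "hv2 i s *s (z - c *s v2) \<in> U" using that(2) cs_smul[OF sub_cs[OF subU]] by blast
    ultimately have m: "H i s *v (z - c *s v2) + c *s (H i s *v v2 - hv2 i s *s v2) - hv2 i s *s (z - c *s v2) \<in> U"
      by (intro cs_diff[OF sub_cs[OF subU]] cs_add[OF sub_cs[OF subU]])
    have eq: "H i s *v (z - c *s v2) + c *s (H i s *v v2 - hv2 i s *s v2) - hv2 i s *s (z - c *s v2)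
       = H i s *v z - hv2 i s *s z"
      by (simp add: matrix_vector_mult_diff_distrib vector_scalar_commute vec_eq_iff algebra_simps)
    show ?thesis using m unfolding eq .
  qed
  have P3: "\<forall>v. v \<in> weight_space q d \<rho> (wt \<pi>) \<and> v \<noteq> 0 \<and> \<not> ell_weight_vector \<rho> v \<longrightarrow>
              generated_submodule \<rho> v = UNIV"
  proof (intro allI impI)
    fix v assume asm: "v \<in> weight_space q d \<rho> (wt \<pi>) \<and> v \<noteq> 0 \<and> \<not> ell_weight_vector \<rho> v"
    then have vw: "v \<in> weight_space q d \<rho> (wt \<pi>)" and v0: "v \<noteq> 0" and nl: "\<not> ell_weight_vector \<rho> v" by auto
    have vU: "v \<notin> U"
    proof
      assume "v \<in> U"
      then obtain c where c: "v = c *s v1" using FactA vw by blast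
      have "\<forall>i s. s \<noteq> 0 \<longrightarrow> H i s *v v = c1 i s *s v"
        using hc1 c by (simp add: vector_scalar_commute vector_smult_assoc mult.commute)
      then have "ell_weight_vector \<rho> v" unfolding ell_weight_vector_def using v0 by blast
      with nl show False by simp
    qed
    have allM: "M = UNIV" if M: "submodule \<rho> M" "v \<in> M" for M
    proof -
      have "M \<inter> U = {0} \<or> M \<inter> U = U" by (rule simpU) (use sub_inter[OF M(1) subU] in auto)
      then show ?thesis
      proof
        assume "M \<inter> U = U"
        then have "U \<subseteq> M" by blast
        then have "M = U \<or> M = UNIV" using simp2 M(1) by blast
        then show ?thesis using vU M(2) by blast
      next
        assume MU: "M \<inter> U = {0}"
        obtain c where c: "v - c *s v2 \<in> U" using FactB[OF vw] by blast
        have "\<forall>i s. s \<noteq> 0 \<longrightarrow> H i s *v v = hv2 i s *s v"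
        proof (intro allI impI)
          fix i s assume s: "(s::int) \<noteq> 0"
          have "H i s *v v - hv2 i s *s v \<in> U" by (rule Heig[OF s c])
          moreover have "H i s *v v - hv2 i s *s v \<in> M"
            using M s by (intro cs_diff[OF sub_cs[OF M(1)]] cs_smul[OF sub_cs[OF M(1)]] sub_gen[OF M(1)]) simp_all
          ultimately have "H i s *v v - hv2 i s *s v \<in> {0}" using MU by blast
          then show "H i s *v v = hv2 i s *s v" by simp
        qed
        then have "ell_weight_vector \<rho> v" unfolding ell_weight_vector_def using v0 by blast
        with nl show ?thesis by simp
      qed
    qed
    show "generated_submodule \<rho> v = UNIV"
      unfolding generated_submodule_def using allM by auto
  qed
  have P1: "\<not> trivial_self_extension q d \<rho> \<pi>" if
    uq: "\<exists>v. hlw_vector q d \<rho> (wt \<pi>) v \<and> (\<forall>w. hlw_vector q d \<rho> (wt \<pi>) w \<longrightarrow> (\<exists>c. w = c *s v))"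
  proof
    assume "trivial_self_extension q d \<rho> \<pi>"
    then obtain U1 U2 where t1: "subquot_is_V q d \<rho> \<pi> {0} U1" and t2: "subquot_is_V q d \<rho> \<pi> {0} U2"
      and t12: "U1 \<inter> U2 = {0}" unfolding trivial_self_extension_def by blast
    have sU1: "submodule \<rho> U1" using t1 unfolding subquot_is_V_def by (elim conjE)
    obtain u1 g1 where u1: "u1 \<in> U1" "hlw_vector q d \<rho> (wt \<pi>) u1" by (rule sq0_hlw[OF t1])
    obtain u2 g2 where u2: "u2 \<in> U2" "hlw_vector q d \<rho> (wt \<pi>) u2" by (rule sq0_hlw[OF t2])
    obtain v where v: "\<forall>w. hlw_vector q d \<rho> (wt \<pi>) w \<longrightarrow> (\<exists>c. w = c *s v)" using uq by blast
    obtain k1 where k1: "u1 = k1 *s v" using v u1 by blast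
    obtain k2 where k2: "u2 = k2 *s v" using v u2 by blast
    have u10: "u1 \<noteq> 0" and u20: "u2 \<noteq> 0" using u1 u2 by (auto simp: hlw_vector_def ell_weight_vector_def)
    then have "k1 \<noteq> 0" using k1 by auto
    then have "u2 = (k2 / k1) *s u1" using k1 k2 by (simp add: vector_smult_assoc)
    then have "u2 \<in> U1" using u1(1) cs_smul[OF sub_cs[OF sU1]] by simp
    then have "u2 \<in> U1 \<inter> U2" using u2 by blast
    then show False using t12 u20 by blast
  qed
  have P2: "\<exists>v. hlw_vector q d \<rho> (wt \<pi>) v \<and> (\<forall>w. hlw_vector q d \<rho> (wt \<pi>) w \<longrightarrow> (\<exists>c. w = c *s v))"
    if nt: "\<not> trivial_self_extension q d \<rho> \<pi>"
  proof (rule exI[of _ v1], intro conjI allI impI)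
    show "hlw_vector q d \<rho> (wt \<pi>) v1" by (rule v1(2))
  next
    fix w assume hlw: "hlw_vector q d \<rho> (wt \<pi>) w"
    obtain cw where hww: "hwmod {0} w (wt \<pi>) cw" and hcw: "\<forall>i s. s \<noteq> 0 \<longrightarrow> H i s *v w = cw i s *s w"
      and w0: "w \<noteq> 0" by (rule hlw_hwmod[OF hlw])
    have ww: "w \<in> weight_space q d \<rho> (wt \<pi>)" and xw: "\<forall>i r. XP i r *v w = 0"
      using hlw by (auto simp: hlw_vector_def)
    show "\<exists>c. w = c *s v1"
    proof (cases "w \<in> U")
      case True then show ?thesis using FactA ww by blast
    next
      case wU: False
      define Sw where "Sw = SS {0} w"
      have subSw: "submodule \<rho> Sw" unfolding Sw_def by (rule SS_sub[OF hww])
      have wSw: "w \<in> Sw" unfolding Sw_def by (rule SS_v[OF hww])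
      have int0: "U \<inter> Sw = {0}"
      proof -
        have "U \<inter> Sw = {0} \<or> U \<inter> Sw = U" by (rule simpU) (use sub_inter[OF subU subSw] in auto)
        moreover have "U \<inter> Sw \<noteq> U"
        proof
          assume "U \<inter> Sw = U"
          then have "v1 \<in> Sw" using v1(1) by blast
          moreover have "\<forall>i. K i *v v1 - (Q i powi wt \<pi> i) *s v1 \<in> {0}"
            using v1(2) by (simp add: hlw_vector_def weight_space_def)
          ultimately obtain c where "v1 - c *s w \<in> {0}" using SS_hw[OF hww] unfolding Sw_def by blast
          then have c: "v1 = c *s w" by simp
          then have "c \<noteq> 0" using v10 by auto
          then have "w = inverse c *s v1" using c by (simp add: vector_smult_assoc)
          then have "w \<in> U" using v1(1) cs_smul[OF sub_cs[OF subU]] by simp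
          with wU show False by simp
        qed
        ultimately show ?thesis by blast
      qed
      have sumU: "ssum U Sw = UNIV"
      proof -
        have "ssum U Sw = U \<or> ssum U Sw = UNIV"
          by (rule simp2[OF sub_ssum[OF subU subSw] ssum_left[OF subSw]])
        moreover have "w \<in> ssum U Sw" using ssum_right[OF subU] wSw by blast
        ultimately show ?thesis using wU by blast
      qed
      obtain cc where cc: "w - cc *s v2 \<in> U" using FactB[OF ww] by blast
      have Hw: "\<forall>i s. s \<noteq> 0 \<longrightarrow> H i s *v w - hv2 i s *s w \<in> {0}"
      proof (intro allI impI)
        fix i s assume s: "(s::int) \<noteq> 0"
        have "H i s *v w - hv2 i s *s w \<in> U" by (rule Heig[OF s cc])
        moreover have "H i s *v w - hv2 i s *s w = (cw i s - hv2 i s) *s w"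
          using hcw s by (simp add: vec_eq_iff algebra_simps)
        ultimately have m: "(cw i s - hv2 i s) *s w \<in> U" by simp
        show "H i s *v w - hv2 i s *s w \<in> {0}"
        proof (cases "cw i s = hv2 i s")
          case True then show ?thesis using hcw s by simp
        next
          case False
          then have "inverse (cw i s - hv2 i s) *s ((cw i s - hv2 i s) *s w) \<in> U"
            using m cs_smul[OF sub_cs[OF subU]] by blast
          moreover have "inverse (cw i s - hv2 i s) *s ((cw i s - hv2 i s) *s w) = w"
            using False by (subst vector_smult_assoc) simp
          ultimately have "w \<in> U" by simp
          with wU show ?thesis by simp
        qed
      qed
      have sqw: "subquot_is_V q d \<rho> \<pi> {0} Sw"
        unfolding subquot_is_V_def
      proof (intro conjI allI impI)
        show "submodule \<rho> {0}" by (rule sub_zero)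
        show "submodule \<rho> Sw" by (rule subSw)
        show "{0} \<subset> Sw" using wSw w0 subSw by (auto simp: sub_cs cs_0)
      next
        fix U' assume h: "submodule \<rho> U' \<and> {0} \<subseteq> U' \<and> U' \<subseteq> Sw"
        have "ssum U' U = U \<or> ssum U' U = UNIV"
          using simp2[OF sub_ssum[OF _ subU] ssum_right] h by blast
        then show "U' = {0} \<or> U' = Sw"
        proof
          assume "ssum U' U = U"
          then have "U' \<subseteq> U" using ssum_left[OF subU, of U'] by blast
          then have "U' \<subseteq> {0}" using h int0 by blast
          then show ?thesis using h by blast
        next
          assume full: "ssum U' U = UNIV"
          have "Sw \<subseteq> U'"
          proof
            fix x assume xS: "x \<in> Sw"
            have "x \<in> ssum U' U" using full by simp
            then obtain y z where yz: "y \<in> U'" "z \<in> U" "x = y + z" unfolding ssum_def by blast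
            have "z = x - y" using yz by simp
            moreover have "x - y \<in> Sw" using xS yz h cs_diff[OF sub_cs[OF subSw]] by blast
            ultimately have "z \<in> U \<inter> Sw" using yz by blast
            then have "z = 0" using int0 by blast
            then show "x \<in> U'" using yz by simp
          qed
          then show ?thesis using h by blast
        qed
      next
        show "\<exists>v\<in>Sw - {0}. \<exists>hv. ell_weight_of q d \<pi> hv \<and>
          (\<forall>i. K i *v v - (Q i powi wt \<pi> i) *s v \<in> {0}) \<and>
          (\<forall>i r. XP i r *v v \<in> {0}) \<and> (\<forall>i s. s \<noteq> 0 \<longrightarrow> H i s *v v - hv i s *s v \<in> {0})"
        proof (intro bexI exI conjI)
          show "ell_weight_of q d \<pi> hv2" by (rule v2(2))
          show "\<forall>i. K i *v w - (Q i powi wt \<pi> i) *s w \<in> {0}" using ww by (simp add: weight_space_def)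
          show "\<forall>i r. XP i r *v w \<in> {0}" using xw by simp
          show "\<forall>i s. s \<noteq> 0 \<longrightarrow> H i s *v w - hv2 i s *s w \<in> {0}" by (rule Hw)
          show "w \<in> Sw - {0}" using wSw w0 by simp
        qed
      qed
      have "trivial_self_extension q d \<rho> \<pi>"
        unfolding trivial_self_extension_def
      proof (intro exI conjI allI)
        show "subquot_is_V q d \<rho> \<pi> {0} U" by (rule sq1)
        show "subquot_is_V q d \<rho> \<pi> {0} Sw" by (rule sqw)
        show "U \<inter> Sw = {0}" by (rule int0)
        fix x
        have "x \<in> ssum U Sw" using sumU by simp
        then show "\<exists>a\<in>U. \<exists>b\<in>Sw. x = a + b" unfolding ssum_def by blast
      qed
      with nt show ?thesis by simp
    qed
  qed
  show ?thesis using P1 P2 P3 by blast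
qed

end

theorem mainTheorem4:
  fixes a :: "'i::finite \<Rightarrow> 'i \<Rightarrow> int" and d :: "'i \<Rightarrow> nat" and q :: complex
    and \<rho> :: "('i, 'n::finite) rep" and \<pi> :: "'i \<Rightarrow> complex poly"
  assumes "finite_type_cartan a d"
    and "q \<noteq> 0" and "\<forall>n::nat. 0 < n \<longrightarrow> q ^ n \<noteq> 1"
    and "drinfeld_poly \<pi>"
    and "in_Fhat a d q \<rho>"
    and "self_extension q d \<rho> \<pi>"
  shows "(\<not> trivial_self_extension q d \<rho> \<pi> \<longleftrightarrow>
           (\<exists>v. hlw_vector q d \<rho> (wt \<pi>) v \<and>
              (\<forall>w. hlw_vector q d \<rho> (wt \<pi>) w \<longrightarrow> (\<exists>c. w = c *s v)))) \<and>
         (\<not> trivial_self_extension q d \<rho> \<pi> \<longrightarrow>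
           (\<forall>v. v \<in> weight_space q d \<rho> (wt \<pi>) \<and> v \<noteq> 0 \<and> \<not> ell_weight_vector \<rho> v \<longrightarrow>
              generated_submodule \<rho> v = UNIV))"
proof -
  interpret qctx a d q \<rho>
    using assms by (unfold_locales) (simp_all add: in_Fhat_def)
  show ?thesis by (rule main[OF assms(6)])
qed

end
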